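(* Let $\mathcal{M}$ be a mechanism with $n$ agents and let $D=(\mathbf{d}^0,\mathbf{d}^1,\dots,\mathbf{d}^T)$ be generated by best-response dynamics with random player order. Fix an agent $i$, a property $P_1$ of the others' declarations $\mathbf{d}_{-i}$, and a property $P_2$ of agent $i$'s declaration $d_i$. Suppose that for every profile, if $P_1(\mathbf{d}_{-i})$ is false then every best response $d_i$ of agent $i$ to $\mathbf{d}_{-i}$ satisfies $P_2(d_i)$. Then for every $\epsilon>0$, if $T>\epsilon^{-1}n$, with probability at least $1-e^{-T\epsilon^2/32n}$ there are at least $(\frac12-\epsilon)T$ steps $t$ for which $P_1(\mathbf{d}^t_{-i})$ or $P_2(d_i^t)$ is true.
   Context: Best-response dynamics with random player order: starting from an initial profile $\mathbf{d}^0$, at each step $t=1,\dots,T$ one agent is chosen independently and uniformly at random from the $n$ agents; that agent may change his declaration to a best response, i.e. a declaration $d\in\arg\max_d u_i(d,\mathbf{d}_{-i}^{t-1})$ maximizing his utility given the others' current declarations (he keeps his previous declaration if he cannot improve his utility); all other agents keep their declarations. *)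

theory Defs
  imports "HOL-Probability.Probability"
begin

text \<open>Agents are 0,...,n-1. A profile of declarations is a function nat => 'd
(entries at indices >= n are irrelevant and never change).
Utilities: u i d is the utility of agent i under profile d.\<close>

definition others :: "nat \<Rightarrow> nat \<Rightarrow> (nat \<Rightarrow> 'd) \<Rightarrow> (nat \<Rightarrow> 'd option)" where
  "others n i d = (\<lambda>j. if j < n \<and> j \<noteq> i then Some (d j) else None)"

definition best_responses :: "(nat \<Rightarrow> (nat \<Rightarrow> 'd) \<Rightarrow> real) \<Rightarrow> nat \<Rightarrow> (nat \<Rightarrow> 'd) \<Rightarrow> 'd set" where
  "best_responses u i d = {x. \<forall>y. u i (d(i := y)) \<le> u i (d(i := x))}"

text \<open>A (history-dependent, possibly adversarial) tie-breaking rule: given the history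
of chosen agents, the chosen agent i and the current profile d, it returns i's new
declaration.\<close>
definition valid_rule :: "nat \<Rightarrow> (nat \<Rightarrow> (nat \<Rightarrow> 'd) \<Rightarrow> real) \<Rightarrow>
    (nat list \<Rightarrow> nat \<Rightarrow> (nat \<Rightarrow> 'd) \<Rightarrow> 'd) \<Rightarrow> bool" where
  "valid_rule n u ch \<longleftrightarrow> (\<forall>h i d. i < n \<longrightarrow>
     (if d i \<in> best_responses u i d then ch h i d = d i
      else ch h i d \<in> best_responses u i d))"

fun brd_profile :: "(nat list \<Rightarrow> nat \<Rightarrow> (nat \<Rightarrow> 'd) \<Rightarrow> 'd) \<Rightarrow> (nat \<Rightarrow> 'd) \<Rightarrow> nat list \<Rightarrow> nat \<Rightarrow> (nat \<Rightarrow> 'd)" where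
  "brd_profile ch d0 as 0 = d0"
| "brd_profile ch d0 as (Suc t) =
     (let p = brd_profile ch d0 as t; a = as ! t in p(a := ch (take t as) a p))"

text \<open>Sequences of T agents chosen independently and uniformly from the n agents.\<close>
definition agent_seqs :: "nat \<Rightarrow> nat \<Rightarrow> nat list set" where
  "agent_seqs n T = {as. length as = T \<and> set as \<subseteq> {..<n}}"

end

theory Submission imports Defs begin

definition goodp :: "nat \<Rightarrow> nat \<Rightarrow> ((nat \<Rightarrow> 'd option) \<Rightarrow> bool) \<Rightarrow> ('d \<Rightarrow> bool) \<Rightarrow> (nat \<Rightarrow> 'd) \<Rightarrow> bool" where
  "goodp n i P1 P2 p \<longleftrightarrow> P1 (others n i p) \<or> P2 (p i)"

definition fpot :: "nat \<Rightarrow> nat \<Rightarrow> ((nat \<Rightarrow> 'd option) \<Rightarrow> bool) \<Rightarrow> ('d \<Rightarrow> bool) \<Rightarrow> (nat \<Rightarrow> 'd) \<Rightarrow> real" where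
  "fpot n i P1 P2 p = (if P2 (p i) then 0 else if P1 (others n i p) then real n else real n - 1)"

definition sc :: "nat \<Rightarrow> nat \<Rightarrow> ((nat \<Rightarrow> 'd option) \<Rightarrow> bool) \<Rightarrow> ('d \<Rightarrow> bool) \<Rightarrow> (nat \<Rightarrow> 'd) \<Rightarrow> real" where
  "sc n i P1 P2 p = (if goodp n i P1 P2 p then -1 else 1)"

definition dl :: "nat \<Rightarrow> nat \<Rightarrow> ((nat \<Rightarrow> 'd option) \<Rightarrow> bool) \<Rightarrow> ('d \<Rightarrow> bool) \<Rightarrow> (nat \<Rightarrow> 'd) \<Rightarrow> (nat \<Rightarrow> 'd) \<Rightarrow> real" where
  "dl n i P1 P2 p q = sc n i P1 P2 q + fpot n i P1 P2 q - fpot n i P1 P2 p"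

lemma others_upd_i: "others n i (p(i := x)) = others n i p"
  by (auto simp: others_def)

lemma exp_le_quad: fixes x :: real assumes "\<bar>x\<bar> \<le> 1" shows "exp x \<le> 1 + x + x\<^sup>2"
proof (cases "0 \<le> x")
  case True then show ?thesis using exp_bound[of x] assms by auto
next
  case False
  have "1 - x \<le> exp (-x)" using exp_ge_add_one_self[of "-x"] by simp
  hence "exp x \<le> 1 / (1 - x)" using False
    by (simp add: exp_minus field_simps)
  also have "\<dots> \<le> 1 + x + x\<^sup>2"
  proof -
    have "(1 - x) * (1 + x + x\<^sup>2) = 1 - x^3"
      by (simp add: algebra_simps power2_eq_square power3_eq_cube)
    also have "\<dots> \<ge> 1"
    proof -
      have "x^3 = x * x\<^sup>2" by (simp add: power2_eq_square power3_eq_cube)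
      also have "\<dots> \<le> 0" using False by (simp add: mult_nonpos_nonneg)
      finally show ?thesis by simp
    qed
    finally show ?thesis using False by (simp add: field_simps)
  qed
  finally show ?thesis .
qed

lemma step_facts:
  assumes "i < n" "valid_rule n u ch"
    and P: "\<And>d x. \<not> P1 (others n i d) \<Longrightarrow> x \<in> best_responses u i d \<Longrightarrow> P2 x"
  shows "(\<Sum>a<n. dl n i P1 P2 p (p(a := ch h a p))) \<le> 0"
    and "\<And>a. a \<noteq> i \<Longrightarrow> \<bar>dl n i P1 P2 p (p(a := ch h a p))\<bar> \<le> 1"
    and "\<bar>dl n i P1 P2 p (p(i := ch h i p))\<bar> \<le> real n + 1"
proof -
  define D where "D a = dl n i P1 P2 p (p(a := ch h a p))" for a
  have br: "ch h i p \<in> best_responses u i p"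
    using assms(1,2) unfolding valid_rule_def by (metis (full_types))
  have n1: "real n \<ge> 1" using assms(1) by simp
  show "\<bar>dl n i P1 P2 p (p(i := ch h i p))\<bar> \<le> real n + 1"
    using n1 by (auto simp: dl_def sc_def fpot_def)
  have oth: "\<And>a. a \<noteq> i \<Longrightarrow> -1 \<le> D a \<and> D a \<le> 1
     \<and> (P2 (p i) \<longrightarrow> D a = -1) \<and> (\<not> P2 (p i) \<and> P1 (others n i p) \<longrightarrow> D a \<le> 0)"
    by (auto simp: D_def dl_def sc_def fpot_def goodp_def)
  then show "\<And>a. a \<noteq> i \<Longrightarrow> \<bar>dl n i P1 P2 p (p(a := ch h a p))\<bar> \<le> 1"
    unfolding D_def by fastforce
  have sr: "(\<Sum>a<n. D a) = D i + (\<Sum>a\<in>{..<n}-{i}. D a)"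
    using assms(1) by (simp add: sum.remove)
  have cr: "card ({..<n}-{i}) = n - 1" using assms(1) by simp
  have ot: "others n i (p(i := ch h i p)) = others n i p" by (rule others_upd_i)
  consider "P2 (p i)" | "\<not> P2 (p i)" "P1 (others n i p)" | "\<not> P2 (p i)" "\<not> P1 (others n i p)" by blast
  then have "(\<Sum>a<n. D a) \<le> 0"
  proof cases
    case 1
    have "\<not> P1 (others n i p) \<Longrightarrow> P2 (ch h i p)" using P br by blast
    hence "D i \<le> real n - 1" using 1 n1 ot by (auto simp: D_def dl_def sc_def fpot_def goodp_def)
    moreover have "(\<Sum>a\<in>{..<n}-{i}. D a) = (\<Sum>a\<in>{..<n}-{i}. -1)"
      using oth 1 by (intro sum.cong) auto
    ultimately show ?thesis using sr cr assms(1) by (simp add: of_nat_diff)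
  next
    case 2
    have "D i \<le> -1" using 2 n1 ot by (auto simp: D_def dl_def sc_def fpot_def goodp_def)
    moreover have "(\<Sum>a\<in>{..<n}-{i}. D a) \<le> (\<Sum>a\<in>{..<n}-{i}. 0)"
      using oth 2 by (intro sum_mono) auto
    ultimately show ?thesis using sr by simp
  next
    case 3
    have "P2 (ch h i p)" using P[OF 3(2) br] .
    hence "D i = - real n" using 3 n1 ot by (auto simp: D_def dl_def sc_def fpot_def goodp_def)
    moreover have "(\<Sum>a\<in>{..<n}-{i}. D a) \<le> (\<Sum>a\<in>{..<n}-{i}. 1)"
      using oth by (intro sum_mono) auto
    ultimately show ?thesis using sr cr assms(1) by (simp add: of_nat_diff)
  qed
  then show "(\<Sum>a<n. dl n i P1 P2 p (p(a := ch h a p))) \<le> 0" by (simp add: D_def)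
qed

lemma exp_sum_bound:
  fixes D :: "nat \<Rightarrow> real" and l d :: real
  assumes "(\<Sum>a<n. D a) \<le> 0" "\<And>a. a \<noteq> i \<Longrightarrow> \<bar>D a\<bar> \<le> 1" "\<bar>D i\<bar> \<le> real n + 1" "i < n"
    "0 \<le> l" "l * (real n + 1) \<le> 1" "l * (real n ^ 2 + 3 * real n) \<le> real n * d"
  shows "(\<Sum>a<n. exp (l * (D a - d))) \<le> real n"
proof -
  have n1: "real n \<ge> 1" using assms(4) by simp
  have e: "exp (l * D a) \<le> 1 + l * D a + l\<^sup>2 * (D a)\<^sup>2" if "a < n" for a
  proof -
    have "\<bar>D a\<bar> \<le> real n + 1" using assms(2,3) n1 by (cases "a = i") force+
    hence "\<bar>l * D a\<bar> \<le> l * (real n + 1)" using assms(5) by (simp add: abs_mult mult_left_mono)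
    hence "\<bar>l * D a\<bar> \<le> 1" using assms(6) by linarith
    from exp_le_quad[OF this] show ?thesis by (simp add: power_mult_distrib)
  qed
  have sq: "(\<Sum>a<n. (D a)\<^sup>2) \<le> (real n + 1)\<^sup>2 + (real n - 1)"
  proof -
    have "(\<Sum>a<n. (D a)\<^sup>2) = (D i)\<^sup>2 + (\<Sum>a\<in>{..<n}-{i}. (D a)\<^sup>2)"
      using assms(4) by (simp add: sum.remove)
    also have "(\<Sum>a\<in>{..<n}-{i}. (D a)\<^sup>2) \<le> (\<Sum>a\<in>{..<n}-{i}. 1)"
      using assms(2) by (intro sum_mono) (simp add: abs_square_le_1)
    also have "(D i)\<^sup>2 \<le> (real n + 1)\<^sup>2"
      using assms(3) by (metis abs_le_square_iff abs_of_nonneg le_add_same_cancel2 n1 dual_order.trans zero_le_one of_nat_0_le_iff add_nonneg_nonneg)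
    ultimately show ?thesis using assms(4) by (simp add: of_nat_diff)
  qed
  have "(\<Sum>a<n. exp (l * D a)) \<le> (\<Sum>a<n. 1 + l * D a + l\<^sup>2 * (D a)\<^sup>2)"
    using e by (intro sum_mono) auto
  also have "\<dots> = real n + l * (\<Sum>a<n. D a) + l\<^sup>2 * (\<Sum>a<n. (D a)\<^sup>2)"
    by (simp add: sum.distrib sum_distrib_left)
  also have "\<dots> \<le> real n + l\<^sup>2 * ((real n + 1)\<^sup>2 + (real n - 1))"
    using assms(1,5) sq by (smt (verit) mult_left_mono mult_nonneg_nonpos zero_le_power2)
  also have "l\<^sup>2 * ((real n + 1)\<^sup>2 + (real n - 1)) = l * (l * (real n ^ 2 + 3 * real n))"
    by (simp add: power2_eq_square algebra_simps)
  also have "\<dots> \<le> l * (real n * d)" using assms(5,7) by (simp add: mult_left_mono)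
  also have "real n + l * (real n * d) = real n * (1 + l * d)" by (simp add: algebra_simps)
  also have "\<dots> \<le> real n * exp (l * d)" using exp_ge_add_one_self[of "l*d"] by (intro mult_left_mono) (auto simp: add.commute)
  finally have A: "(\<Sum>a<n. exp (l * D a)) \<le> real n * exp (l * d)" by simp
  have "(\<Sum>a<n. exp (l * (D a - d))) = (\<Sum>a<n. exp (l * D a)) * exp (- (l * d))"
    by (simp add: sum_distrib_right right_diff_distrib exp_diff exp_minus divide_inverse)
  also have "\<dots> \<le> real n * exp (l * d) * exp (- (l * d))"
    using A by (simp add: mult_right_mono)
  also have "\<dots> = real n" by (simp add: exp_minus)
  finally show ?thesis .
qed


lemma prof_append: "t \<le> length as \<Longrightarrow> brd_profile ch d0 (as @ bs) t = brd_profile ch d0 as t"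
  by (induction t) (auto simp: Let_def nth_append)

lemma prof_snoc: "brd_profile ch d0 (as @ [a]) (Suc (length as)) =
   (let p = brd_profile ch d0 as (length as) in p(a := ch as a p))"
  by (simp add: Let_def prof_append)

definition Wt where
  "Wt n i P1 P2 ch d0 as T = (\<Sum>t<T. dl n i P1 P2 (brd_profile ch d0 as t) (brd_profile ch d0 as (Suc t)))"

lemma Wt_snoc: "Wt n i P1 P2 ch d0 (as @ [a]) (Suc (length as)) = Wt n i P1 P2 ch d0 as (length as)
   + dl n i P1 P2 (brd_profile ch d0 as (length as))
       ((brd_profile ch d0 as (length as))(a := ch as a (brd_profile ch d0 as (length as))))"
proof -
  have A: "(\<Sum>t<length as. dl n i P1 P2 (brd_profile ch d0 (as @ [a]) t) (brd_profile ch d0 (as @ [a]) (Suc t)))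
     = (\<Sum>t<length as. dl n i P1 P2 (brd_profile ch d0 as t) (brd_profile ch d0 as (Suc t)))"
    by (intro sum.cong refl) (simp add: prof_append Suc_le_eq del: brd_profile.simps)
  show ?thesis unfolding Wt_def
    using A by (simp add: prof_append prof_snoc Let_def del: brd_profile.simps)
qed

lemma Wt_eq: "Wt n i P1 P2 ch d0 as T = (\<Sum>t\<in>{1..T}. sc n i P1 P2 (brd_profile ch d0 as t))
   + fpot n i P1 P2 (brd_profile ch d0 as T) - fpot n i P1 P2 d0"
proof (induction T)
  case 0 then show ?case by (simp add: Wt_def)
next
  case (Suc T)
  have "Wt n i P1 P2 ch d0 as (Suc T) = Wt n i P1 P2 ch d0 as T
     + dl n i P1 P2 (brd_profile ch d0 as T) (brd_profile ch d0 as (Suc T))"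
    unfolding Wt_def by (simp del: brd_profile.simps)
  then show ?case using Suc by (simp add: dl_def del: brd_profile.simps)
qed

lemma agent_seqs_Suc: "agent_seqs n (Suc T) = (\<lambda>(as, a). as @ [a]) ` (agent_seqs n T \<times> {..<n})"
proof
  show "agent_seqs n (Suc T) \<subseteq> (\<lambda>(as, a). as @ [a]) ` (agent_seqs n T \<times> {..<n})"
  proof
    fix xs assume xs: "xs \<in> agent_seqs n (Suc T)"
    hence ne: "xs \<noteq> []" by (auto simp: agent_seqs_def)
    hence "xs = butlast xs @ [last xs]" by simp
    moreover have "butlast xs \<in> agent_seqs n T" "last xs \<in> {..<n}"
      using xs ne by (auto simp: agent_seqs_def dest: in_set_butlastD intro!: subsetD[OF _ last_in_set])
    ultimately show "xs \<in> (\<lambda>(as, a). as @ [a]) ` (agent_seqs n T \<times> {..<n})"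
      by (metis (no_types, lifting) SigmaI case_prod_conv image_eqI)
  qed
qed (auto simp: agent_seqs_def)

lemma main_sum:
  assumes step: "\<And>h p. (\<Sum>a<n. exp (l * (dl n i P1 P2 p (p(a := ch h a p)) - d))) \<le> real n"
  shows "(\<Sum>as\<in>agent_seqs n T. exp (l * (Wt n i P1 P2 ch d0 as T - d * real T))) \<le> real n ^ T"
proof (induction T)
  case 0
  have "agent_seqs n 0 = {[]}" by (auto simp: agent_seqs_def)
  then show ?case by (simp add: Wt_def)
next
  case (Suc T)
  have inj: "inj_on (\<lambda>(as, a). as @ [a]) (agent_seqs n T \<times> {..<n})"
    by (auto simp: inj_on_def)
  have len: "as \<in> agent_seqs n T \<Longrightarrow> length as = T" for as by (simp add: agent_seqs_def)
  have "(\<Sum>as\<in>agent_seqs n (Suc T). exp (l * (Wt n i P1 P2 ch d0 as (Suc T) - d * real (Suc T))))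
     = (\<Sum>as\<in>agent_seqs n T. \<Sum>a<n. exp (l * (Wt n i P1 P2 ch d0 (as @ [a]) (Suc T) - d * real (Suc T))))"
    unfolding agent_seqs_Suc sum.reindex[OF inj] sum.cartesian_product
    by (intro sum.cong refl) auto
  also have "\<dots> = (\<Sum>as\<in>agent_seqs n T. exp (l * (Wt n i P1 P2 ch d0 as T - d * real T)) *
      (\<Sum>a<n. exp (l * (dl n i P1 P2 (brd_profile ch d0 as T)
       ((brd_profile ch d0 as T)(a := ch as a (brd_profile ch d0 as T))) - d))))"
  proof (intro sum.cong refl)
    fix as assume "as \<in> agent_seqs n T"
    hence L: "length as = T" by (rule len)
    show "(\<Sum>a<n. exp (l * (Wt n i P1 P2 ch d0 (as @ [a]) (Suc T) - d * real (Suc T)))) =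
      exp (l * (Wt n i P1 P2 ch d0 as T - d * real T)) *
      (\<Sum>a<n. exp (l * (dl n i P1 P2 (brd_profile ch d0 as T)
       ((brd_profile ch d0 as T)(a := ch as a (brd_profile ch d0 as T))) - d)))"
      unfolding sum_distrib_left
    proof (intro sum.cong refl)
      fix a
      show "exp (l * (Wt n i P1 P2 ch d0 (as @ [a]) (Suc T) - d * real (Suc T))) =
        exp (l * (Wt n i P1 P2 ch d0 as T - d * real T)) *
        exp (l * (dl n i P1 P2 (brd_profile ch d0 as T)
       ((brd_profile ch d0 as T)(a := ch as a (brd_profile ch d0 as T))) - d))"
        using Wt_snoc[of n i P1 P2 ch d0 as a] L
        by (simp add: exp_add[symmetric] algebra_simps del: brd_profile.simps)
    qed
  qed
  also have "\<dots> \<le> (\<Sum>as\<in>agent_seqs n T. exp (l * (Wt n i P1 P2 ch d0 as T - d * real T)) * real n)"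
    by (intro sum_mono mult_left_mono step) auto
  also have "\<dots> \<le> real n ^ T * real n" using Suc by (simp add: sum_distrib_right[symmetric] mult_right_mono)
  finally show ?case by (simp add: mult.commute)
qed


lemma sum_sc: "finite A \<Longrightarrow> (\<Sum>t\<in>A. sc n i P1 P2 (f t)) = real (card A) - 2 * real (card {t\<in>A. goodp n i P1 P2 (f t)})"
proof -
  assume A: "finite A"
  have "(\<Sum>t\<in>A. sc n i P1 P2 (f t)) = (\<Sum>t\<in>A. 1 - 2 * (if goodp n i P1 P2 (f t) then 1 else 0))"
    by (intro sum.cong refl) (simp add: sc_def)
  also have "\<dots> = real (card A) - 2 * (\<Sum>t\<in>A. (if goodp n i P1 P2 (f t) then 1 else 0))"
    by (simp add: sum_subtractf sum_distrib_left)
  also have "(\<Sum>t\<in>A. (if goodp n i P1 P2 (f t) then 1 else 0)) = real (card {t\<in>A. goodp n i P1 P2 (f t)})"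
    using A by (simp add: sum.inter_filter[symmetric])
  finally show ?thesis .
qed

theorem lemma4p2:
  fixes n T i :: nat
    and u :: "nat \<Rightarrow> (nat \<Rightarrow> 'd) \<Rightarrow> real"
    and ch :: "nat list \<Rightarrow> nat \<Rightarrow> (nat \<Rightarrow> 'd) \<Rightarrow> 'd"
    and d0 :: "nat \<Rightarrow> 'd"
    and P1 :: "(nat \<Rightarrow> 'd option) \<Rightarrow> bool"
    and P2 :: "'d \<Rightarrow> bool"
    and \<epsilon> :: real
  assumes "i < n"
    and "valid_rule n u ch"
    and "\<And>d x. \<not> P1 (others n i d) \<Longrightarrow> x \<in> best_responses u i d \<Longrightarrow> P2 x"
    and "\<epsilon> > 0"
    and "real T > real n / \<epsilon>"
  shows "measure_pmf.prob (pmf_of_set (agent_seqs n T))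
           {as. real (card {t \<in> {1..T}. P1 (others n i (brd_profile ch d0 as t))
                                         \<or> P2 (brd_profile ch d0 as t i)})
                \<ge> (1/2 - \<epsilon>) * real T}
         \<ge> 1 - exp (- real T * \<epsilon>^2 / (32 * real n))"
proof -
  define G where "G = {as. real (card {t \<in> {1..T}. P1 (others n i (brd_profile ch d0 as t))
                                         \<or> P2 (brd_profile ch d0 as t i)})
                \<ge> (1/2 - \<epsilon>) * real T}"
  define S where "S = agent_seqs n T"
  have n1: "real n \<ge> 1" using assms(1) by simp
  have finS: "finite S" unfolding S_def agent_seqs_def
    using finite_lists_length_eq[of "{..<n}" T] by (simp add: conj_commute)
  have cardS: "card S = n ^ T" unfolding S_def agent_seqs_def
    using card_lists_length_eq[of "{..<n}" T] by (simp add: conj_commute)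
  have Sne: "S \<noteq> {}" using cardS assms(1) by auto
  have eT: "real n < \<epsilon> * real T" using assms(4,5) by (simp add: field_simps)
  have prob: "measure_pmf.prob (pmf_of_set S) G = card (S \<inter> G) / card S"
    by (rule measure_pmf_of_set[OF Sne finS])
  show ?thesis
  proof (cases "\<epsilon> \<ge> 1/2")
    case True
    have "(1/2 - \<epsilon>) * real T \<le> 0" using True by (simp add: mult_nonpos_nonneg)
    hence "S \<inter> G = S" unfolding G_def by (auto intro: order_trans)
    hence "measure_pmf.prob (pmf_of_set S) G = 1" using prob Sne finS by simp
    thus ?thesis unfolding S_def G_def by simp
  next
    case False
    define l where "l = \<epsilon> / (16 * real n)"
    define d where "d = \<epsilon> / 2"
    define K where "K = real T * \<epsilon>^2 / (32 * real n)"
    have l0: "0 \<le> l" using assms(4) n1 by (simp add: l_def)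
    have l1: "l * (real n + 1) \<le> 1"
    proof -
      have "l * (real n + 1) = \<epsilon> * (real n + 1) / (16 * real n)" by (simp add: l_def)
      also have "\<dots> \<le> 1"
      proof -
        have "\<epsilon> * real n \<le> 1 * real n" using False n1 by (intro mult_right_mono) auto
        hence "\<epsilon> + \<epsilon> * real n \<le> real n * 16" using False n1 by linarith
        thus ?thesis using n1 by (simp add: field_simps)
      qed
      finally show ?thesis .
    qed
    have l2: "l * (real n ^ 2 + 3 * real n) \<le> real n * d"
    proof -
      have "l * (real n ^ 2 + 3 * real n) = \<epsilon> * (real n + 3) / 16" using n1
        by (simp add: l_def power2_eq_square field_simps)
      also have "\<dots> \<le> real n * d" using n1 assms(4) by (simp add: d_def field_simps)
      finally show ?thesis .
    qed
    have step: "(\<Sum>a<n. exp (l * (dl n i P1 P2 p (p(a := ch h a p)) - d))) \<le> real n" for h p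
      using step_facts[OF assms(1,2,3), where p=p and h=h]
      by (intro exp_sum_bound[OF _ _ _ assms(1) l0 l1 l2]) auto
    have tot: "(\<Sum>as\<in>S. exp (l * (Wt n i P1 P2 ch d0 as T - d * real T))) \<le> real n ^ T"
      unfolding S_def by (rule main_sum[OF step])
    have bnd: "exp K \<le> exp (l * (Wt n i P1 P2 ch d0 as T - d * real T))" if "as \<in> S - G" for as
    proof -
      let ?C = "card {t\<in>{1..T}. goodp n i P1 P2 (brd_profile ch d0 as t)}"
      have C: "real ?C < (1/2 - \<epsilon>) * real T" using that
        unfolding G_def goodp_def by auto
      have f1: "fpot n i P1 P2 (brd_profile ch d0 as T) \<ge> 0" "fpot n i P1 P2 d0 \<le> real n"
        using n1 by (auto simp: fpot_def)
      have W: "Wt n i P1 P2 ch d0 as T = real T - 2 * real ?C + fpot n i P1 P2 (brd_profile ch d0 as T) - fpot n i P1 P2 d0"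
        unfolding Wt_eq by (simp add: sum_sc)
      have "Wt n i P1 P2 ch d0 as T - d * real T \<ge> \<epsilon> * real T / 2"
        using W C f1 eT by (simp add: d_def algebra_simps)
      hence "l * (\<epsilon> * real T / 2) \<le> l * (Wt n i P1 P2 ch d0 as T - d * real T)"
        using l0 by (rule mult_left_mono)
      moreover have "l * (\<epsilon> * real T / 2) = K" by (simp add: l_def K_def power2_eq_square)
      ultimately show ?thesis by simp
    qed
    have "real (card (S - G)) * exp K = (\<Sum>as\<in>S - G. exp K)" by simp
    also have "\<dots> \<le> (\<Sum>as\<in>S - G. exp (l * (Wt n i P1 P2 ch d0 as T - d * real T)))"
      by (intro sum_mono bnd)
    also have "\<dots> \<le> (\<Sum>as\<in>S. exp (l * (Wt n i P1 P2 ch d0 as T - d * real T)))"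
      using finS by (intro sum_mono2) auto
    also have "\<dots> \<le> real n ^ T" by (rule tot)
    finally have cb: "real (card (S - G)) * exp K \<le> real n ^ T" .
    have npos: "real n ^ T > 0" using n1 by simp
    have "real (card (S - G)) / real (card S) \<le> exp (- K)"
      using cb npos cardS by (simp add: exp_minus field_simps)
    moreover have "real (card (S \<inter> G)) = real (card S) - real (card (S - G))"
      using finS card_Diff_subset_Int[of S G]
      by (metis Diff_Diff_Int Diff_subset card_Diff_subset finite_Diff of_nat_diff card_mono)
    ultimately have "measure_pmf.prob (pmf_of_set S) G \<ge> 1 - exp (- K)"
      using prob npos cardS assms(1) by (simp add: diff_divide_distrib)
    moreover have "- K = - real T * \<epsilon>^2 / (32 * real n)" by (simp add: K_def)
    ultimately show ?thesis unfolding S_def G_def by simp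
  qed
qed

end
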